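(* For every triangle $ABC$ with $b=c>a$, we have $AX_2<AX_{15}<AX_{17}$; that is, in the isosceles order, $X_2\prec X_{15}\prec X_{17}$.
   Context: $X_n$ denotes the $n$-th triangle center listed in Kimberling's Encyclopedia of Triangle Centers (ETC), given by barycentric coordinates in terms of $a=BC$, $b=CA$, $c=AB$. The isosceles order: $P\prec Q$ if $P$ is closer to $A$ than $Q$ in every isosceles triangle $ABC$ with $b=c>a$. *)

theory Defs
  imports "HOL-Analysis.Analysis"
begin

definition bary :: "complex \<Rightarrow> complex \<Rightarrow> complex \<Rightarrow> real \<Rightarrow> real \<Rightarrow> real \<Rightarrow> complex" where
  "bary A B C u v w = (u *\<^sub>R A + v *\<^sub>R B + w *\<^sub>R C) /\<^sub>R (u + v + w)"

definition opp_angle :: "real \<Rightarrow> real \<Rightarrow> real \<Rightarrow> real" where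
  "opp_angle a b c = arccos ((b\<^sup>2 + c\<^sup>2 - a\<^sup>2) / (2 * b * c))"

definition X2 :: "complex \<Rightarrow> complex \<Rightarrow> complex \<Rightarrow> complex" where
  "X2 A B C = bary A B C 1 1 1"

text \<open>X(15): trilinears sin(A + pi/3) : ..., i.e. barycentrics a sin(A + pi/3) : ...\<close>
definition X15 :: "complex \<Rightarrow> complex \<Rightarrow> complex \<Rightarrow> complex" where
  "X15 A B C = (let a = dist B C; b = dist C A; c = dist A B;
       \<alpha> = opp_angle a b c; \<beta> = opp_angle b c a; \<gamma> = opp_angle c a b
     in bary A B C (a * sin (\<alpha> + pi/3)) (b * sin (\<beta> + pi/3)) (c * sin (\<gamma> + pi/3)))"

text \<open>X(17): trilinears csc(A + pi/6) : ..., i.e. barycentrics a / sin(A + pi/6) : ...\<close>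
definition X17 :: "complex \<Rightarrow> complex \<Rightarrow> complex \<Rightarrow> complex" where
  "X17 A B C = (let a = dist B C; b = dist C A; c = dist A B;
       \<alpha> = opp_angle a b c; \<beta> = opp_angle b c a; \<gamma> = opp_angle c a b
     in bary A B C (a / sin (\<alpha> + pi/6)) (b / sin (\<beta> + pi/6)) (c / sin (\<gamma> + pi/6)))"

end

theory Submission
  imports Defs
begin

lemma key1:
  fixes \<beta> :: real
  assumes "pi/3 < \<beta>" "\<beta> < pi/2"
  shows "2 * cos \<beta> * sin (pi - 2*\<beta> + pi/3) < sin (\<beta> + pi/3)"
proof -
  define \<alpha> where "\<alpha> = pi - 2*\<beta>"
  have sb: "sin \<beta> > 0" using assms by (intro sin_gt_zero) auto
  have sa: "sin \<alpha> = 2 * sin \<beta> * cos \<beta>" unfolding \<alpha>_def by (simp add: sin_double)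
  have e1: "sin \<alpha> * sin (\<alpha> + pi/3) = (cos (- (pi/3)) - cos (2*\<alpha> + pi/3)) / 2"
    by (simp add: sin_times_sin algebra_simps)
  have e2: "sin \<beta> * sin (\<beta> + pi/3) = (cos (- (pi/3)) - cos (2*\<beta> + pi/3)) / 2"
    by (simp add: sin_times_sin algebra_simps)
  have c1: "cos (2*\<beta> + pi/3) = cos (5*pi/3 - 2*\<beta>)"
    using cos_2pi_minus[of "2*\<beta> + pi/3"] by (simp add: algebra_simps)
  have c2: "cos (2*\<alpha> + pi/3) = cos (7*pi/3 - 4*\<beta>)"
    unfolding \<alpha>_def by (simp add: algebra_simps)
  have "cos (5*pi/3 - 2*\<beta>) < cos (7*pi/3 - 4*\<beta>)"
    using assms by (intro cos_monotone_0_pi) auto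
  hence "sin \<beta> * (2 * cos \<beta> * sin (\<alpha> + pi/3)) < sin \<beta> * sin (\<beta> + pi/3)"
    using e1 e2 c1 c2 sa by (simp add: algebra_simps)
  thus ?thesis using sb unfolding \<alpha>_def by simp
qed

lemma key2:
  fixes \<beta> :: real
  assumes "pi/3 < \<beta>" "\<beta> < pi/2"
  shows "sin (\<beta> + pi/3) * sin (\<beta> + pi/6) < sin (pi - 2*\<beta> + pi/3) * sin (pi - 2*\<beta> + pi/6)"
proof -
  define \<alpha> where "\<alpha> = pi - 2*\<beta>"
  have e1: "sin (\<alpha> + pi/3) * sin (\<alpha> + pi/6) = (cos (pi/6) - cos (2*\<alpha> + pi/2)) / 2"
    by (simp add: sin_times_sin algebra_simps)
  have e2: "sin (\<beta> + pi/3) * sin (\<beta> + pi/6) = (cos (pi/6) - cos (2*\<beta> + pi/2)) / 2"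
    by (simp add: sin_times_sin algebra_simps)
  have f: "cos (x + pi/2) = - sin x" for x :: real by (simp add: cos_add)
  have sa: "sin \<alpha> > 0" using assms unfolding \<alpha>_def by (intro sin_gt_zero) auto
  have ca: "cos (pi/3) < cos \<alpha>" using assms unfolding \<alpha>_def by (intro cos_monotone_0_pi) auto
  hence ca': "cos \<alpha> > 1/2" by (simp add: cos_60)
  have "sin (2*\<beta>) = sin \<alpha>" unfolding \<alpha>_def by simp
  moreover have "sin (2*\<alpha>) = 2 * sin \<alpha> * cos \<alpha>" by (simp add: sin_double)
  moreover have "sin \<alpha> < 2 * sin \<alpha> * cos \<alpha>" 
  proof -
    have "sin \<alpha> * 1 < sin \<alpha> * (2 * cos \<alpha>)" using sa ca' by (intro mult_strict_left_mono) auto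
    thus ?thesis by (simp add: algebra_simps)
  qed
  ultimately have "sin (2*\<beta>) < sin (2*\<alpha>)" by simp
  thus ?thesis using e1 e2 f[of "2*\<beta>"] f[of "2*\<alpha>"] unfolding \<alpha>_def by simp
qed

lemma dist_bary:
  fixes A B C :: complex and u v :: real
  assumes "u + 2 * v \<noteq> 0"
  shows "dist A (bary A B C u v v) = \<bar>v / (u+2 * v)\<bar> * norm (2*A - B - C)"
proof -
  have "A - bary A B C u v v = complex_of_real (v / (u+2 * v)) * (2*A - B - C)"
  proof -
    have "complex_of_real u + complex_of_real v * 2 \<noteq> 0"
      using assms by (metis of_real_add of_real_mult of_real_numeral of_real_eq_0_iff mult.commute)
    thus ?thesis unfolding bary_def scaleR_conv_of_real
      by (simp add: field_simps)
  qed
  hence "dist A (bary A B C u v v) = norm (complex_of_real (v / (u+2 * v)) * (2*A - B - C))"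
    by (simp only: dist_norm)
  also have "\<dots> = \<bar>v / (u+2 * v)\<bar> * norm (2*A - B - C)" by (simp only: norm_mult norm_of_real)
  finally show ?thesis .
qed

lemma ratio_less:
  fixes u1 v1 u2 v2 :: real
  assumes "u1 > 0" "v1 > 0" "u2 > 0" "v2 > 0" "v1 * u2 < v2 * u1"
  shows "\<bar>v1 / (u1+2 * v1)\<bar> < \<bar>v2 / (u2+2 * v2)\<bar>"
  using assms by (simp add: divide_simps algebra_simps)

theorem theorem3p2:
  fixes A B C :: complex
  assumes "\<not> collinear {A, B, C}"
    and "dist C A = dist A B"
    and "dist A B > dist B C"
  shows "dist A (X2 A B C) < dist A (X15 A B C) \<and> dist A (X15 A B C) < dist A (X17 A B C)"
proof -
  define a where "a = dist B C"
  define b where "b = dist C A"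
  have cb: "dist A B = b" using assms(2) b_def by simp
  have "B \<noteq> C" using assms(1) by (auto simp: collinear_2)
  hence a0: "a > 0" unfolding a_def by simp
  have ab: "a < b" using assms(3) cb a_def by simp
  define k where "k = a / (2*b)"
  have k0: "0 < k" "k < 1/2" using a0 ab unfolding k_def by (auto simp: field_simps)
  define \<beta> where "\<beta> = arccos k"
  have cbk: "cos \<beta> = k" unfolding \<beta>_def using k0 by (intro cos_arccos) auto
  have b1: "pi/3 < \<beta>"
  proof -
    have "arccos (1/2) < arccos k" using k0 by (intro arccos_less_arccos) auto
    moreover have "arccos (1/2) = pi/3" using arccos_cos[of "pi/3"] by (simp add: cos_60)
    ultimately show ?thesis unfolding \<beta>_def by simp
  qed
  have b2: "\<beta> < pi/2"
  proof -
    have "arccos k < arccos 0" using k0 by (intro arccos_less_arccos) auto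
    thus ?thesis unfolding \<beta>_def by simp
  qed
  have ob1: "opp_angle b b a = \<beta>" unfolding opp_angle_def \<beta>_def k_def using a0 ab
    by (simp add: power2_eq_square field_simps)
  have ob2: "opp_angle b a b = \<beta>" unfolding opp_angle_def \<beta>_def k_def using a0 ab
    by (simp add: power2_eq_square field_simps)
  have oa: "opp_angle a b b = pi - 2*\<beta>"
  proof -
    have "(b\<^sup>2 + b\<^sup>2 - a\<^sup>2) / (2 * b * b) = 1 - 2*k^2" unfolding k_def using a0 ab
      by (simp add: power2_eq_square field_simps)
    also have "\<dots> = cos (pi - 2*\<beta>)" using cbk by (simp add: cos_double_cos)
    finally have eq: "(b\<^sup>2 + b\<^sup>2 - a\<^sup>2) / (2 * b * b) = cos (pi - 2*\<beta>)" .
    show ?thesis unfolding opp_angle_def eq by (rule arccos_cos) (use b1 b2 in auto)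
  qed
  define u15 where "u15 = a * sin (pi - 2*\<beta> + pi/3)"
  define v15 where "v15 = b * sin (\<beta> + pi/3)"
  define u17 where "u17 = a / sin (pi - 2*\<beta> + pi/6)"
  define v17 where "v17 = b / sin (\<beta> + pi/6)"
  have X15e: "X15 A B C = bary A B C u15 v15 v15"
    unfolding X15_def Let_def u15_def v15_def
    by (simp add: a_def[symmetric] b_def[symmetric] cb dist_commute[of A C] ob1 oa)
     (metis ob1 ob2 a_def b_def cb dist_commute)
  have X17e: "X17 A B C = bary A B C u17 v17 v17"
    unfolding X17_def Let_def u17_def v17_def
    by (simp add: a_def[symmetric] b_def[symmetric] cb dist_commute[of A C] ob1 oa)
     (metis ob1 ob2 a_def b_def cb dist_commute)
  have s1: "sin (pi - 2*\<beta> + pi/3) > 0" using b1 b2 by (intro sin_gt_zero) auto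
  have s2: "sin (\<beta> + pi/3) > 0" using b1 b2 by (intro sin_gt_zero) auto
  have s3: "sin (pi - 2*\<beta> + pi/6) > 0" using b1 b2 by (intro sin_gt_zero) auto
  have s4: "sin (\<beta> + pi/6) > 0" using b1 b2 by (intro sin_gt_zero) auto
  have p: "u15 > 0" "v15 > 0" "u17 > 0" "v17 > 0"
    using s1 s2 s3 s4 a0 ab unfolding u15_def v15_def u17_def v17_def by auto
  have ineq1: "1 * u15 < v15 * 1"
  proof -
    have bpos: "b > 0" using ab a0 by linarith
    have "2 * b * (a / (2 * b)) = a" using bpos by simp
    hence "a = 2 * b * cos \<beta>" unfolding cbk k_def by simp
    moreover have gen: "\<And>x y z S :: real. x = 2*y*z \<Longrightarrow> x*S = y*(2*z*S)" by simp
    ultimately have "u15 = b * (2 * cos \<beta> * sin (pi - 2*\<beta> + pi/3))" unfolding u15_def by blast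
    also have "\<dots> < v15" unfolding v15_def using key1[OF b1 b2] bpos by (rule mult_strict_left_mono)
    finally show ?thesis by simp
  qed
  have ineq2: "v15 * u17 < v17 * u15"
  proof -
    have "v15 * u17 = a * b * (sin (\<beta> + pi/3) * sin (\<beta> + pi/6)) / (sin (pi - 2*\<beta> + pi/6) * sin (\<beta> + pi/6))"
      unfolding v15_def u17_def using s4 by (simp add: field_simps)
    also have "\<dots> < a * b * (sin (pi - 2*\<beta> + pi/3) * sin (pi - 2*\<beta> + pi/6)) / (sin (pi - 2*\<beta> + pi/6) * sin (\<beta> + pi/6))"
      using key2[OF b1 b2] a0 ab s3 s4 by (intro divide_strict_right_mono mult_strict_left_mono) auto
    also have "\<dots> = v17 * u15"
      unfolding v17_def u15_def using s3 by (simp add: field_simps)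
    finally show ?thesis .
  qed
  have n0: "norm (2*A - B - C) > 0"
  proof (rule ccontr)
    assume "\<not> ?thesis"
    hence z: "2*A - B - C = 0" by simp
    have "C - B = 2*(C - A) + (2*A - B - C)" by (simp add: algebra_simps)
    hence "C - B = 2*(C - A)" using z by simp
    hence "norm (C - B) = norm (2*(C - A))" by (rule arg_cong)
    hence "norm (C - B) = 2 * norm (C - A)" by (simp only: norm_mult) simp
    hence "dist B C = 2 * b" unfolding b_def by (simp add: dist_norm norm_minus_commute)
    thus False using ab a0 unfolding a_def by simp
  qed
  have d2: "dist A (X2 A B C) = \<bar>1 / (1 + 2*1)\<bar> * norm (2*A - B - C)"
    unfolding X2_def by (rule dist_bary) simp
  have d15: "dist A (X15 A B C) = \<bar>v15 / (u15 + 2 * v15)\<bar> * norm (2*A - B - C)"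
    unfolding X15e using p by (intro dist_bary) simp
  have d17: "dist A (X17 A B C) = \<bar>v17 / (u17 + 2 * v17)\<bar> * norm (2*A - B - C)"
    unfolding X17e using p by (intro dist_bary) simp
  have r1: "\<bar>1 / (1 + 2*1)\<bar> < \<bar>v15 / (u15 + 2 * v15)\<bar>"
    using ratio_less[of 1 1 u15 v15] ineq1 p by simp
  have r2: "\<bar>v15 / (u15 + 2 * v15)\<bar> < \<bar>v17 / (u17 + 2 * v17)\<bar>"
    using ratio_less[of u15 v15 u17 v17] ineq2 p by simp
  show ?thesis unfolding d2 d15 d17 by (intro conjI mult_strict_right_mono r1 r2 n0)
qed

end
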